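(* Let $g\ge 3$ be an odd integer and let $m=\frac{g^2+1}{2}$. Let $C_m(\{g\};\{1\})$ be the mixed graph with vertex set $\{x_0,\dots,x_{m-1}\}$ (indices modulo $m$), arc set $\{(x_i,x_{i+g}) : 0\le i\le m-1\}$ and edge set $\{x_ix_{i+1} : 0\le i\le m-1\}$. Then $C_m(\{g\};\{1\})$ is a $[1,2;g]$-mixed graph of order $\frac{g^2+1}{2}$.
   Context: A mixed graph is a finite simple graph that may contain both edges and arcs. A $[z,r;g]$-mixed graph is a mixed graph in which every vertex is the tail of exactly $z$ arcs, the head of exactly $z$ arcs, and is incident with exactly $r$ edges, and whose girth is $g$. Walks traverse edges in either direction and arcs only in their direction; a cycle is a closed walk with no repeated vertices (other than start = end) and no repeated edge or arc; the girth is the length of a shortest cycle. *)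

theory Defs
  imports Main
begin

definition mixed_graph :: "'a set \<Rightarrow> 'a set set \<Rightarrow> ('a \<times> 'a) set \<Rightarrow> bool" where
  "mixed_graph V E A \<longleftrightarrow>
     finite V
   \<and> (\<forall>e\<in>E. \<exists>u v. e = {u, v} \<and> u \<noteq> v \<and> u \<in> V \<and> v \<in> V)
   \<and> (\<forall>(u, v)\<in>A. u \<noteq> v \<and> u \<in> V \<and> v \<in> V)
   \<and> (\<forall>(u, v)\<in>A. {u, v} \<notin> E)
   \<and> (\<forall>(u, v)\<in>A. (v, u) \<notin> A)"

datatype 'a link = Edge "'a set" | Arc 'a 'a

definition mixed_step :: "'a set set \<Rightarrow> ('a \<times> 'a) set \<Rightarrow> 'a \<Rightarrow> 'a link \<Rightarrow> 'a \<Rightarrow> bool" where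
  "mixed_step E A u l v \<longleftrightarrow> (l = Edge {u, v} \<and> {u, v} \<in> E) \<or> (l = Arc u v \<and> (u, v) \<in> A)"

definition mixed_cycle :: "'a set \<Rightarrow> 'a set set \<Rightarrow> ('a \<times> 'a) set \<Rightarrow> 'a list \<Rightarrow> 'a link list \<Rightarrow> bool" where
  "mixed_cycle V E A vs ls \<longleftrightarrow>
     length ls \<ge> 1
   \<and> length vs = length ls + 1
   \<and> set vs \<subseteq> V
   \<and> hd vs = last vs
   \<and> (\<forall>i < length ls. mixed_step E A (vs ! i) (ls ! i) (vs ! Suc i))
   \<and> distinct (butlast vs)
   \<and> distinct ls"

definition mixed_girth_eq :: "'a set \<Rightarrow> 'a set set \<Rightarrow> ('a \<times> 'a) set \<Rightarrow> nat \<Rightarrow> bool" where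
  "mixed_girth_eq V E A g \<longleftrightarrow>
     (\<exists>vs ls. mixed_cycle V E A vs ls \<and> length ls = g)
   \<and> (\<forall>vs ls. mixed_cycle V E A vs ls \<longrightarrow> g \<le> length ls)"

definition zrg_mixed_graph :: "'a set \<Rightarrow> 'a set set \<Rightarrow> ('a \<times> 'a) set \<Rightarrow> nat \<Rightarrow> nat \<Rightarrow> nat \<Rightarrow> bool" where
  "zrg_mixed_graph V E A z r g \<longleftrightarrow>
     mixed_graph V E A
   \<and> (\<forall>u\<in>V. card {v. (u, v) \<in> A} = z)
   \<and> (\<forall>u\<in>V. card {v. (v, u) \<in> A} = z)
   \<and> (\<forall>u\<in>V. card {e\<in>E. u \<in> e} = r)
   \<and> mixed_girth_eq V E A g"

text \<open>The mixed circulant C_m({a};{b}) on vertices 0..m-1 (indices mod m):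
arcs (i, i+a) and edges {i, i+b}.\<close>

definition circ_V :: "nat \<Rightarrow> nat set" where
  "circ_V m = {..<m}"

definition circ_A :: "nat \<Rightarrow> nat \<Rightarrow> (nat \<times> nat) set" where
  "circ_A m a = {(i, (i + a) mod m) | i. i < m}"

definition circ_E :: "nat \<Rightarrow> nat \<Rightarrow> nat set set" where
  "circ_E m b = {{i, (i + b) mod m} | i. i < m}"

end

theory Submission
  imports Defs
begin
lemma arith_key:
  fixes H a s :: int
  assumes H: "H \<ge> 1" and a0: "a \<ge> 0" and b: "\<bar>s\<bar> + a \<le> 2*H"
    and d: "(2*(H*H)+2*H+1) dvd (2*(a*H) + a + s)"
  shows "a = 0"
proof -
  define M where "M = 2*(H*H)+2*H+1"
  obtain t where t: "2*(a*H) + a + s = M*t" using d M_def by (auto simp: dvd_def)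
  have HH: "H*H \<ge> H" using H by simp
  have Mpos: "M > 0" unfolding M_def using HH H by linarith
  have aleq: "a \<le> 2*H" using b by simp
  have aH: "a*H \<le> 2*(H*H)" using mult_right_mono[of a "2*H" H] aleq H by simp
  have aHp: "a*H \<ge> 0" using a0 H by simp
  have sa: "s \<le> \<bar>s\<bar>" "-\<bar>s\<bar> \<le> s" by auto
  have up: "M*t < 2*M" using t b aH M_def sa H by linarith
  have lo: "M*t > -M" using t b aHp HH H sa M_def a0 by linarith
  have "t < 2"
  proof (rule ccontr)
    assume "\<not> t < 2" then have "M*2 \<le> M*t" using Mpos by (intro mult_left_mono) auto
    then show False using up by linarith
  qed
  moreover have "t > -1"
  proof (rule ccontr)
    assume "\<not> t > -1" then have "M*t \<le> M*(-1)" using Mpos by (intro mult_left_mono) auto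
    then show False using lo by linarith
  qed
  ultimately consider "t = 0" | "t = 1" by linarith
  then show ?thesis
  proof cases
    case 1
    then have "2*(a*H) + a + s = 0" using t by simp
    moreover have "a \<ge> 1 \<Longrightarrow> a*H \<ge> 1*H" using H by (intro mult_right_mono) auto
    ultimately show ?thesis using a0 aHp b sa H by (cases "a \<ge> 1") linarith+
  next
    case 2
    then have e: "2*(a*H) + a + s = M" using t by simp
    consider "a \<le> H - 1" | "a = H" | "a \<ge> H + 1" by linarith
    then show ?thesis
    proof cases
      case 1
      then have "a*H \<le> (H-1)*H" using H by (intro mult_right_mono) auto
      then have "a*H \<le> H*H - H" by (simp add: algebra_simps)
      then show ?thesis using e b 1 M_def sa H by linarith
    next
      case 2 then show ?thesis using e b M_def sa by simp
    next
      case 3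
      then have "a*H \<ge> (H+1)*H" using H by (intro mult_right_mono) auto
      then have "a*H \<ge> H*H + H" by (simp add: algebra_simps)
      then show ?thesis using e b 3 M_def sa H by linarith
    qed
  qed
qed

locale circ =
  fixes h g m :: nat
  assumes h1: "h \<ge> 1" and gdef: "g = 2*h+1" and mdef: "m = 2*(h*h)+2*h+1"
begin

lemma hh: "h*h \<ge> h" using h1 by simp
lemma g_lt: "g + 1 < m" using hh h1 gdef mdef by linarith
lemma m3: "m \<ge> 5" using hh h1 mdef by linarith
lemma g2: "2*g \<noteq> m"
proof
  assume "2*g = m"
  moreover have "odd m" using mdef by simp
  ultimately show False by (metis dvd_triv_left)
qed

lemma mod1: "i < m \<Longrightarrow> Suc i mod m = (if Suc i = m then 0 else Suc i)"
  by auto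
lemma gpos: "g > 0" using gdef by simp

lemma modg: "i < m \<Longrightarrow> (i + g) mod m = (if i+g < m then i+g else i+g-m)"
  using g_lt by (auto simp: mod_if)
lemma g3: "g \<ge> 3" using gdef h1 by simp

definition sc where "sc i = (if Suc i = m then 0 else Suc i)"
definition ad where "ad i = (if i+g < m then i+g else i+g-m)"

lemma sc_mod: "i < m \<Longrightarrow> (i + 1) mod m = sc i" unfolding sc_def using mod1 by simp
lemma ad_mod: "i < m \<Longrightarrow> (i + g) mod m = ad i" unfolding ad_def using modg by simp
lemma E_eq: "circ_E m 1 = {{i, sc i} | i. i < m}"
  unfolding circ_E_def by (rule Collect_cong) (metis sc_mod)
lemma A_eq: "circ_A m g = {(i, ad i) | i. i < m}"
  unfolding circ_A_def by (rule Collect_cong) (metis ad_mod)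


lemma sc_lt: "i < m \<Longrightarrow> sc i < m" unfolding sc_def by auto
lemma ad_lt: "i < m \<Longrightarrow> ad i < m" unfolding ad_def using g_lt by auto
lemma sc_ne: "i < m \<Longrightarrow> sc i \<noteq> i" unfolding sc_def using m3 by auto
lemma ad_ne: "i < m \<Longrightarrow> ad i \<noteq> i" unfolding ad_def using g_lt gpos by auto
lemma ad_sc: "i < m \<Longrightarrow> ad i \<noteq> sc i" unfolding ad_def sc_def using g_lt g3 by auto
lemma sc_ad: "i < m \<Longrightarrow> j < m \<Longrightarrow> i = sc j \<Longrightarrow> ad i \<noteq> j"
  unfolding ad_def sc_def using g_lt gpos by (auto split: if_splits)
lemma ad_ad: "i < m \<Longrightarrow> ad (ad i) \<noteq> i"
  unfolding ad_def using g_lt gpos g2 by (auto split: if_splits)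

lemma G1: "\<forall>e\<in>circ_E m 1. \<exists>u v. e = {u, v} \<and> u \<noteq> v \<and> u \<in> circ_V m \<and> v \<in> circ_V m"
proof
  fix e assume "e \<in> circ_E m 1"
  then obtain i where "i < m" "e = {i, sc i}" unfolding E_eq by blast
  then show "\<exists>u v. e = {u, v} \<and> u \<noteq> v \<and> u \<in> circ_V m \<and> v \<in> circ_V m"
    using sc_lt[of i] sc_ne[of i] unfolding circ_V_def by (intro exI[of _ i] exI[of _ "sc i"]) auto
qed
lemma G2: "\<forall>(u, v)\<in>circ_A m g. u \<noteq> v \<and> u \<in> circ_V m \<and> v \<in> circ_V m"
  unfolding A_eq circ_V_def using ad_lt ad_ne by fastforce
lemma G3: "\<forall>(u, v)\<in>circ_A m g. {u, v} \<notin> circ_E m 1"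
proof (clarify)
  fix u v assume "(u, v) \<in> circ_A m g" "{u, v} \<in> circ_E m 1"
  then obtain i j where "i < m" "j < m" "u = i" "v = ad i" "{i, ad i} = {j, sc j}"
    unfolding A_eq E_eq by blast
  then show False using ad_sc[of i] sc_ad[of i j] by (auto simp: doubleton_eq_iff)
qed
lemma G4: "\<forall>(u, v)\<in>circ_A m g. (v, u) \<notin> circ_A m g"
proof clarify
  fix u v assume "(u, v) \<in> circ_A m g" "(v, u) \<in> circ_A m g"
  then obtain i where "i < m" "u = i" "v = ad i" "u = ad v" unfolding A_eq by blast
  then show False using ad_ad[of i] by simp
qed

lemma graph: "mixed_graph (circ_V m) (circ_E m 1) (circ_A m g)"
  unfolding mixed_graph_def using G1 G2 G3 G4 by (simp add: circ_V_def)

lemma ad_inj: "i < m \<Longrightarrow> j < m \<Longrightarrow> ad i = ad j \<Longrightarrow> i = j"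
  unfolding ad_def by (auto split: if_splits)

lemma outdeg: "u < m \<Longrightarrow> card {v. (u, v) \<in> circ_A m g} = 1"
proof -
  assume u: "u < m"
  have "{v. (u, v) \<in> circ_A m g} = {ad u}" unfolding A_eq using u by auto
  then show ?thesis by simp
qed

lemma indeg: "u < m \<Longrightarrow> card {v. (v, u) \<in> circ_A m g} = 1"
proof -
  assume u: "u < m"
  define w where "w = (if u \<ge> g then u - g else u + m - g)"
  have w: "w < m" "ad w = u" unfolding w_def ad_def using u g_lt by auto
  have "{v. (v, u) \<in> circ_A m g} = {w}" unfolding A_eq using w ad_inj by auto
  then show ?thesis by simp
qed

lemma edeg: "u < m \<Longrightarrow> card {e\<in>circ_E m 1. u \<in> e} = 2"
proof -
  assume u: "u < m"
  define p where "p = (if u = 0 then m - 1 else u - 1)"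
  have p: "p < m" "sc p = u" unfolding p_def sc_def using u m3 by auto
  have sc_inj: "\<And>i j. i < m \<Longrightarrow> j < m \<Longrightarrow> sc i = sc j \<Longrightarrow> i = j" unfolding sc_def by (auto split: if_splits)
  have "{e\<in>circ_E m 1. u \<in> e} = {{u, sc u}, {p, u}}"
  proof
    show "{e \<in> circ_E m 1. u \<in> e} \<subseteq> {{u, sc u}, {p, u}}"
    proof
      fix e assume "e \<in> {e \<in> circ_E m 1. u \<in> e}"
      then obtain i where i: "i < m" "e = {i, sc i}" and ue: "u \<in> e" unfolding E_eq by blast
      then have "u = i \<or> u = sc i" by auto
      moreover have "u = sc i \<Longrightarrow> i = p" using p sc_inj i by metis
      ultimately show "e \<in> {{u, sc u}, {p, u}}" using i by auto
    qed
    show "{{u, sc u}, {p, u}} \<subseteq> {e \<in> circ_E m 1. u \<in> e}"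
      unfolding E_eq using u p by auto
  qed
  moreover have "{u, sc u} \<noteq> {p, u}" unfolding p_def sc_def using u m3
    by (auto simp: doubleton_eq_iff split: if_splits)
  ultimately show ?thesis by simp
qed
definition f where "f j = (if j \<le> h then j*g else h*g + (j-h))"
definition lk where "lk j = (if j < h then Arc (f j) (f (Suc j)) else Edge {f j, sc (f j)})"

lemma hg: "h*g = 2*(h*h) + h" using gdef by (simp add: algebra_simps)
lemma f_lt: "j < g \<Longrightarrow> f j < m"
proof -
  assume j: "j < g"
  show ?thesis
  proof (cases "j \<le> h")
    case True
    then have "j*g \<le> h*g" by simp
    then show ?thesis using True hg mdef unfolding f_def by simp
  next
    case False then show ?thesis using j hg mdef gdef unfolding f_def by simp
  qed
qed
lemma f_mono: "strict_mono f"
  unfolding strict_mono_Suc_iff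
proof
  fix n
  show "f n < f (Suc n)"
  proof (cases "n < h")
    case True then show ?thesis unfolding f_def using gpos by simp
  next
    case False
    then consider "n = h" | "n > h" by linarith
    then show ?thesis unfolding f_def by cases auto
  qed
qed
lemma sc_sc: "x < m \<Longrightarrow> sc (sc x) \<noteq> x" unfolding sc_def using m3 by auto
lemma sc_f: "h \<le> j \<Longrightarrow> j < g \<Longrightarrow> sc (f j) = (if Suc j = g then 0 else f (Suc j))"
  unfolding sc_def f_def using hg mdef gdef by auto
lemma ad_f: "j < h \<Longrightarrow> ad (f j) = f (Suc j)"
proof -
  assume j: "j < h"
  have "Suc j * g \<le> h*g" using j by (intro mult_right_mono) auto
  then show ?thesis unfolding ad_def f_def using j hg mdef by auto
qed

lemma cyc_exists: "mixed_cycle (circ_V m) (circ_E m 1) (circ_A m g) (map f [0..<g] @ [0]) (map lk [0..<g])"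
proof -
  let ?vs = "map f [0..<g] @ [0]" and ?ls = "map lk [0..<g]"
  have nth_vs: "\<And>j. j \<le> g \<Longrightarrow> ?vs ! j = (if j = g then 0 else f j)"
    by (auto simp: nth_append)
  have steps: "\<forall>i < length ?ls. mixed_step (circ_E m 1) (circ_A m g) (?vs ! i) (?ls ! i) (?vs ! Suc i)"
  proof (intro allI impI)
    fix j assume "j < length ?ls"
    then have j: "j < g" by simp
    show "mixed_step (circ_E m 1) (circ_A m g) (?vs ! j) (?ls ! j) (?vs ! Suc j)"
    proof (cases "j < h")
      case True
      then have "Suc j \<noteq> g" using gdef by simp
      then show ?thesis using True j f_lt[of j] ad_f[of j] nth_vs[of j] nth_vs[of "Suc j"]
        unfolding mixed_step_def lk_def A_eq by auto
    next
      case False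
      then have "?vs ! Suc j = sc (f j)" using sc_f[of j] j nth_vs[of "Suc j"] by simp
      then show ?thesis using False j f_lt[of j] nth_vs[of j]
        unfolding mixed_step_def lk_def E_eq by auto
    qed
  qed
  have dvs: "distinct (butlast ?vs)"
    using strict_mono_imp_inj_on[OF f_mono] by (simp add: distinct_map inj_on_subset)
  have "inj_on lk {0..<g}"
  proof (rule inj_onI)
    fix i j assume i: "i \<in> {0..<g}" and j: "j \<in> {0..<g}" and e: "lk i = lk j"
    have "f i = f j"
    proof (cases "i < h")
      case True
      then show ?thesis using e unfolding lk_def by (auto split: if_splits)
    next
      case False
      then have "\<not> j < h" using e unfolding lk_def by (auto split: if_splits)
      then have "{f i, sc (f i)} = {f j, sc (f j)}" using e False unfolding lk_def by auto
      then show ?thesis using sc_sc[of "f i"] f_lt[of i] i by (auto simp: doubleton_eq_iff)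
    qed
    then show "i = j" using strict_mono_eq[OF f_mono] by simp
  qed
  then have dls: "distinct ?ls" by (simp add: distinct_map)
  have "set ?vs \<subseteq> circ_V m" using f_lt m3 unfolding circ_V_def by auto
  moreover have "hd ?vs = last ?vs" using g3 f_def by (simp add: hd_map hd_append)
  ultimately show ?thesis unfolding mixed_cycle_def using steps dvs dls g3 by simp
qed

lemma step_char:
  assumes u: "u < m" and v: "v < m" and st: "mixed_step (circ_E m 1) (circ_A m g) u l v"
  shows "(l = Arc u v \<and> int v = (int u + int g) mod int m) \<or>
         ((\<exists>e. l = Edge e) \<and> (int v = (int u + 1) mod int m \<or> int v = (int u - 1) mod int m))"
proof -
  have scm: "\<And>i. i < m \<Longrightarrow> sc i = Suc i mod m" unfolding sc_def using mod1 by simp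
  consider "l = Edge {u, v}" "{u, v} \<in> circ_E m 1" | "l = Arc u v" "(u, v) \<in> circ_A m g"
    using st unfolding mixed_step_def by blast
  then show ?thesis
  proof cases
    case 1
    then obtain i where i: "i < m" "{u, v} = {i, sc i}" unfolding E_eq by blast
    then consider "u = i" "v = sc i" | "v = i" "u = sc i" by (auto simp: doubleton_eq_iff)
    then show ?thesis
    proof cases
      case 1
      then have "int v = int (Suc u mod m)" using scm i by simp
      then have "int v = (int u + 1) mod int m" by (simp add: zmod_int add.commute)
      then show ?thesis using \<open>l = Edge {u, v}\<close> by blast
    next
      case 2
      then have "int u = int (Suc v mod m)" using scm i by simp
      then have "int u = (int v + 1) mod int m" by (simp add: zmod_int add.commute)
      then have "(int u - 1) mod int m = ((int v + 1) mod int m - 1) mod int m" by simp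
      also have "\<dots> = int v mod int m" by (simp add: mod_diff_left_eq)
      also have "\<dots> = int v" using v by simp
      finally show ?thesis using \<open>l = Edge {u, v}\<close> by auto
    qed
  next
    case 2
    then obtain i where "i < m" "u = i" "v = ad i" unfolding A_eq by blast
    then have "v = (u + g) mod m" using modg ad_def by simp
    then have "int v = (int u + int g) mod int m" by (simp add: zmod_int)
    then show ?thesis using 2 by blast
  qed
qed

context
  fixes vs ls
  assumes cyc: "mixed_cycle (circ_V m) (circ_E m 1) (circ_A m g) vs ls"
begin

lemma lens: "length vs = length ls + 1" "length ls \<ge> 1" using cyc unfolding mixed_cycle_def by auto

lemma vlt: "i \<le> length ls \<Longrightarrow> vs ! i < m"
proof -
  assume "i \<le> length ls"
  then have "vs ! i \<in> set vs" using lens by simp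
  then show ?thesis using cyc unfolding mixed_cycle_def circ_V_def by auto
qed

lemma vk: "vs ! length ls = vs ! 0"
proof -
  have "vs \<noteq> []" using lens by auto
  then have "hd vs = vs ! 0" "last vs = vs ! length ls" using lens by (auto simp: hd_conv_nth last_conv_nth)
  then show ?thesis using cyc unfolding mixed_cycle_def by simp
qed

lemma vstep: "i < length ls \<Longrightarrow> mixed_step (circ_E m 1) (circ_A m g) (vs ! i) (ls ! i) (vs ! Suc i)"
  using cyc unfolding mixed_cycle_def by auto

lemma vdist: "i < length ls \<Longrightarrow> j < length ls \<Longrightarrow> vs ! i = vs ! j \<Longrightarrow> i = j"
proof -
  assume ij: "i < length ls" "j < length ls" "vs ! i = vs ! j"
  have d: "distinct (butlast vs)" using cyc unfolding mixed_cycle_def by simp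
  have l: "length (butlast vs) = length ls" using lens by simp
  have "butlast vs ! i = butlast vs ! j" using ij l by (simp add: nth_butlast)
  then show "i = j" using d ij l nth_eq_iff_index_eq by metis
qed

definition dd where "dd i = (case ls ! i of Arc x y \<Rightarrow> int g
   | Edge e \<Rightarrow> (if int (vs ! Suc i) = (int (vs ! i) + 1) mod int m then 1 else -1))"

lemma dstep: "i < length ls \<Longrightarrow> int (vs ! Suc i) = (int (vs ! i) + dd i) mod int m
   \<and> ((\<exists>x y. ls ! i = Arc x y) \<longrightarrow> dd i = int g)
   \<and> ((\<exists>e. ls ! i = Edge e) \<longrightarrow> dd i = 1 \<or> dd i = -1)"
proof -
  assume i: "i < length ls"
  have c: "(ls ! i = Arc (vs ! i) (vs ! Suc i) \<and> int (vs ! Suc i) = (int (vs ! i) + int g) mod int m) \<or>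
         ((\<exists>e. ls ! i = Edge e) \<and> (int (vs ! Suc i) = (int (vs ! i) + 1) mod int m \<or> int (vs ! Suc i) = (int (vs ! i) - 1) mod int m))"
    using step_char[OF vlt vlt vstep] i by simp
  then show ?thesis
  proof
    assume "ls ! i = Arc (vs ! i) (vs ! Suc i) \<and> int (vs ! Suc i) = (int (vs ! i) + int g) mod int m"
    then show ?thesis unfolding dd_def by simp
  next
    assume "(\<exists>e. ls ! i = Edge e) \<and> (int (vs ! Suc i) = (int (vs ! i) + 1) mod int m \<or> int (vs ! Suc i) = (int (vs ! i) - 1) mod int m)"
    then obtain e where e: "ls ! i = Edge e" and
      vv: "int (vs ! Suc i) = (int (vs ! i) + 1) mod int m \<or> int (vs ! Suc i) = (int (vs ! i) - 1) mod int m" by blast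
    have dde: "dd i = (if int (vs ! Suc i) = (int (vs ! i) + 1) mod int m then 1 else -1)"
      unfolding dd_def e by simp
    have nA: "\<not> (\<exists>x y. ls ! i = Arc x y)" using e by simp
    show ?thesis
    proof (cases "int (vs ! Suc i) = (int (vs ! i) + 1) mod int m")
      case True then show ?thesis using dde nA e by simp
    next
      case False then have "int (vs ! Suc i) = (int (vs ! i) - 1) mod int m" using vv by blast
      then show ?thesis using dde nA e False by simp
    qed
  qed
qed

lemma pos: "j \<le> length ls \<Longrightarrow> int (vs ! j) = (int (vs ! 0) + (\<Sum>i<j. dd i)) mod int m"
proof (induction j)
  case 0 then show ?case using vlt[of 0] by simp
next
  case (Suc j)
  then have "int (vs ! Suc j) = (int (vs ! j) + dd j) mod int m" using dstep by simp
  also have "\<dots> = ((int (vs ! 0) + (\<Sum>i<j. dd i)) mod int m + dd j) mod int m" using Suc by simp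
  also have "\<dots> = (int (vs ! 0) + (\<Sum>i<Suc j. dd i)) mod int m" by (simp add: mod_add_left_eq add.assoc)
  finally show ?case .
qed

lemma decomp: "j \<le> length ls \<Longrightarrow> \<exists>a s. (\<Sum>i<j. dd i) = 2*(int a * int h) + int a + s
   \<and> \<bar>s\<bar> + int a \<le> int j \<and> (a = 0 \<longrightarrow> (\<forall>i<j. \<exists>e. ls ! i = Edge e))"
proof (induction j)
  case 0 then show ?case by (intro exI[of _ 0]) auto
next
  case (Suc j)
  then obtain a s where as: "(\<Sum>i<j. dd i) = 2*(int a * int h) + int a + s"
    "\<bar>s\<bar> + int a \<le> int j" "a = 0 \<longrightarrow> (\<forall>i<j. \<exists>e. ls ! i = Edge e)" by auto
  have j: "j < length ls" using Suc by simp
  show ?case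
  proof (cases "ls ! j")
    case (Edge e)
    then have "dd j = 1 \<or> dd j = -1" using dstep[OF j] by blast
    then show ?thesis
    proof
      assume "dd j = 1"
      then show ?thesis using as Edge by (intro exI[of _ a] exI[of _ "s+1"]) (auto simp: less_Suc_eq)
    next
      assume "dd j = -1"
      then show ?thesis using as Edge by (intro exI[of _ a] exI[of _ "s-1"]) (auto simp: less_Suc_eq)
    qed
  next
    case (Arc x y)
    then have "dd j = int g" using dstep[OF j] by blast
    then show ?thesis using as gdef by (intro exI[of _ "Suc a"] exI[of _ s]) (auto simp: algebra_simps)
  qed
qed

lemma mdvd: "int m dvd (\<Sum>i<length ls. dd i)"
proof -
  have "int (vs ! 0) = (int (vs ! 0) + (\<Sum>i<length ls. dd i)) mod int m" using pos[of "length ls"] vk by simp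
  moreover have "int (vs ! 0) = int (vs ! 0) mod int m" using vlt[of 0] by simp
  ultimately have "(int (vs ! 0) + (\<Sum>i<length ls. dd i)) mod int m = int (vs ! 0) mod int m" by simp
  then show ?thesis by (simp add: mod_eq_dvd_iff)
qed

lemma alledge:
  assumes k3: "length ls \<ge> 3" and km: "length ls < m" and ed: "\<forall>i<length ls. \<exists>e. ls ! i = Edge e"
  shows False
proof -
  let ?k = "length ls"
  have pm: "\<And>i. i < ?k \<Longrightarrow> dd i = 1 \<or> dd i = -1" using dstep ed by blast
  have same: "dd (Suc i) = dd i" if i: "Suc i < ?k" for i
  proof (rule ccontr)
    assume ne: "dd (Suc i) \<noteq> dd i"
    then have z: "dd i + dd (Suc i) = 0" using pm[of i] pm[of "Suc i"] i by auto
    have "int (vs ! Suc (Suc i)) = (int (vs ! Suc i) + dd (Suc i)) mod int m" using dstep i by blast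
    also have "\<dots> = ((int (vs ! i) + dd i) mod int m + dd (Suc i)) mod int m" using dstep i by simp
    also have "\<dots> = (int (vs ! i) + (dd i + dd (Suc i))) mod int m" by (simp add: mod_add_left_eq add.assoc)
    also have "\<dots> = int (vs ! i)" using z vlt[of i] i by simp
    finally have eq: "vs ! Suc (Suc i) = vs ! i" by simp
    show False
    proof (cases "Suc (Suc i) < ?k")
      case True then show False using vdist[of "Suc (Suc i)" i] eq i by simp
    next
      case False
      then have "Suc (Suc i) = ?k" using i by simp
      then have "vs ! 0 = vs ! i" using eq vk by simp
      moreover have "i < ?k" "0 < ?k" "i \<noteq> 0" using i k3 \<open>Suc (Suc i) = ?k\<close> by auto
      ultimately show False using vdist[of 0 i] by simp
    qed
  qed
  have all: "\<And>i. i < ?k \<Longrightarrow> dd i = dd 0"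
  proof -
    fix i show "i < ?k \<Longrightarrow> dd i = dd 0"
      by (induction i) (use same in auto)
  qed
  then have "(\<Sum>i<?k. dd i) = int ?k * dd 0" by simp
  then have "int m dvd int ?k * dd 0" using mdvd by simp
  moreover have "dd 0 = 1 \<or> dd 0 = -1" using pm[of 0] k3 by fastforce
  ultimately have "int m dvd int ?k" by auto
  then have "m dvd ?k" by simp
  then show False using km k3 by (auto dest: nat_dvd_not_less)
qed

lemma small: "length ls \<ge> 3"
proof (rule ccontr)
  assume "\<not> length ls \<ge> 3"
  then consider "length ls = 1" | "length ls = 2" using lens by linarith
  then show False
  proof cases
    case 1
    then have "mixed_step (circ_E m 1) (circ_A m g) (vs ! 0) (ls ! 0) (vs ! 0)" using vstep[of 0] vk by simp
    then show False using G1 G2 unfolding mixed_step_def by fastforce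
  next
    case 2
    have s0: "mixed_step (circ_E m 1) (circ_A m g) (vs ! 0) (ls ! 0) (vs ! 1)" using vstep[of 0] 2 by simp
    have s1: "mixed_step (circ_E m 1) (circ_A m g) (vs ! 1) (ls ! 1) (vs ! 0)" using vstep[of 1] 2 vk by (simp add: eval_nat_numeral)
    have "ls ! 0 \<noteq> ls ! 1" using cyc 2 unfolding mixed_cycle_def by (auto simp: nth_eq_iff_index_eq)
    then show False using s0 s1 G3 G4 unfolding mixed_step_def by (auto simp: insert_commute)
  qed
qed

lemma lower: "g \<le> length ls"
proof (rule ccontr)
  assume "\<not> g \<le> length ls"
  then have kg: "length ls < g" by simp
  obtain a s where as: "(\<Sum>i<length ls. dd i) = 2*(int a * int h) + int a + s"
    "\<bar>s\<bar> + int a \<le> int (length ls)" "a = 0 \<longrightarrow> (\<forall>i<length ls. \<exists>e. ls ! i = Edge e)"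
    using decomp[of "length ls"] by auto
  have mi: "int m = 2*(int h * int h) + 2 * int h + 1" using mdef by simp
  have "(2*(int h * int h) + 2 * int h + 1) dvd (2*(int a * int h) + int a + s)"
    using mdvd as(1) mi by simp
  moreover have "\<bar>s\<bar> + int a \<le> 2 * int h" using as(2) kg gdef by simp
  ultimately have "int a = 0" using arith_key[of "int h" "int a" s] h1 by simp
  then show False using alledge small kg g_lt as(3) by simp
qed

end

lemma girth: "mixed_girth_eq (circ_V m) (circ_E m 1) (circ_A m g) g"
  unfolding mixed_girth_eq_def using cyc_exists lower by fastforce

end
theorem lemma5:
  fixes g m :: nat
  assumes "odd g" and "g \<ge> 3" and "m = (g ^ 2 + 1) div 2"
  shows "zrg_mixed_graph (circ_V m) (circ_E m 1) (circ_A m g) 1 2 g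
         \<and> card (circ_V m) = (g ^ 2 + 1) div 2"
proof -
  obtain h where hd: "g = 2*h+1" using assms(1) oddE by blast
  have h1: "h \<ge> 1" using hd assms(2) by simp
  have "g^2 + 1 = 2*(2*(h*h)+2*h+1)" using hd by (simp add: power2_eq_square algebra_simps)
  then have md: "m = 2*(h*h)+2*h+1" using assms(3) by simp
  interpret circ h g m using h1 hd md by unfold_locales auto
  have "zrg_mixed_graph (circ_V m) (circ_E m 1) (circ_A m g) 1 2 g"
    unfolding zrg_mixed_graph_def using graph outdeg indeg edeg girth by (simp add: circ_V_def)
  moreover have "card (circ_V m) = (g ^ 2 + 1) div 2" using assms(3) by (simp add: circ_V_def)
  ultimately show ?thesis by simp
qed

end
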